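(* Let $f:\mathbb{R}^n\to\mathbb{R}$ be convex and continuously differentiable, with $|f(x)-f(y)|\le L_0\|x-y\|$ and $\|\nabla f(x)-\nabla f(y)\|\le L_1\|x-y\|$ for all $x,y$. Let the noisy objective be $\tilde f(x;\xi)=f(x)[1+\nu(x;\xi)]$, where $\nu$ is i.i.d. with $\mathbb{E}[\nu]=0$ and variance $\sigma_r^2=\mathrm{Var}(\nu)>0$, $\mathbb{E}[\frac{1}{1+\nu}]\le b$, and the support of $\nu$ is contained in $[-a,a]$ for some $a<1$. Let $u\in\mathbb{R}^n$ be a standard Gaussian vector and $u,\xi_1,\xi_2$ independent, and for $\mu>0$ define $$\mathcal{E}(\mu)=\left\|\frac{\tilde f(x+\mu u;\xi_1)-\tilde f(x;\xi_2)}{\mu}u-\langle\nabla f(x),u\rangle u\right\|^2 .$$ Let $x\in\mathbb{R}^n$ with $f(x)\ne0$, and choose $$\mu^*=C_4\sqrt{|f(x)|},\qquad C_4=\left[\frac{16\sigma_r^2 n}{L_1^2(1+3\sigma_r^2)(n+6)^3}\right]^{1/4}.$$ Then $$\mathbb{E}_{u,\xi_1,\xi_2}[\mathcal{E}(\mu^* )]\le 2L_1\sigma_r\sqrt{(1+3\sigma_r^2)n(n+6)^3}\,|f(x)|+3L_0^2\sigma_r^2(n+4)^2.$$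
   Context: $\|\cdot\|$ is the Euclidean norm, $\langle\cdot,\cdot\rangle$ the Euclidean inner product; "standard Gaussian" means mean $0$ and covariance $I_n$. The noise values in the two evaluations are independent copies of $\nu$. *)

theory Defs
  imports "HOL-Probability.Probability"
begin

definition std_gaussian :: "'a::euclidean_space measure" where
  "std_gaussian = density lborel
     (\<lambda>x. ennreal ((2 * pi) powr (- real DIM('a) / 2) * exp (- (norm x)\<^sup>2 / 2)))"

definition est_err :: "('a::euclidean_space \<Rightarrow> real) \<Rightarrow> ('a \<Rightarrow> 'a) \<Rightarrow> 'a \<Rightarrow> real
    \<Rightarrow> 'a \<Rightarrow> real \<Rightarrow> real \<Rightarrow> real" where
  "est_err f g x \<mu> u v1 v2 =
     (norm (((f (x + \<mu> *\<^sub>R u) * (1 + v1) - f x * (1 + v2)) / \<mu>) *\<^sub>R u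
            - (g x \<bullet> u) *\<^sub>R u))\<^sup>2"

end

theory Submission
  imports Defs
begin


definition SS :: "'b set \<Rightarrow> ('b \<Rightarrow> real) \<Rightarrow> real" where
  "SS I \<xi> = (\<Sum>i\<in>I. (\<xi> i)\<^sup>2)"
definition PP :: "'b set \<Rightarrow> ('b \<Rightarrow> real) \<Rightarrow> real" where
  "PP I \<xi> = (\<Prod>i\<in>I. std_normal_density (\<xi> i))"

lemma meas_SS[measurable]: "SS I \<in> borel_measurable (PiM I (\<lambda>_. lborel))"
  unfolding SS_def by measurable
lemma meas_SS'[measurable]: "SS I \<in> borel_measurable (PiM I (\<lambda>_. borel))"
  unfolding SS_def by measurable
lemma meas_PP[measurable]: "PP I \<in> borel_measurable (PiM I (\<lambda>_. lborel))"
  unfolding PP_def by measurable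

lemma meas_SP[measurable]:
  "(\<lambda>\<xi>. ennreal (SS I \<xi> ^ k * PP I \<xi>)) \<in> borel_measurable (PiM I (\<lambda>_. lborel))"
  unfolding SS_def PP_def by measurable

lemma mom0: "has_bochner_integral lborel (\<lambda>y. std_normal_density y * y^(2*0)) 1"
  using std_normal_moment_even[of 0] by simp
lemma mom1: "has_bochner_integral lborel (\<lambda>y. std_normal_density y * y^(2*1)) 1"
  using std_normal_moment_even[of 1] by (simp add: numeral_eq_Suc)
lemma mom2: "has_bochner_integral lborel (\<lambda>y. std_normal_density y * y^(2*2)) 3"
  using std_normal_moment_even[of 2] by (simp add: fact_numeral)
lemma mom3: "has_bochner_integral lborel (\<lambda>y. std_normal_density y * y^(2*3)) 15"
  using std_normal_moment_even[of 3] by (simp add: fact_numeral)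

lemma nn_from_hb:
  assumes "has_bochner_integral lborel h r" "\<And>y. 0 \<le> h y"
  shows "(\<integral>\<^sup>+ y. ennreal (h y) \<partial>lborel) = ennreal r"
proof -
  have "integrable lborel h" using assms(1) by (simp add: has_bochner_integral_iff)
  then show ?thesis using nn_integral_eq_integral[of lborel h] assms has_bochner_integral_integral_eq
    by auto
qed

lemma inner3:
  assumes "0 \<le> s" "0 \<le> p"
  shows "(\<integral>\<^sup>+ y. ennreal ((s + y\<^sup>2)^3 * p * std_normal_density y) \<partial>lborel)
     = ennreal (p * (s ^ 3 + 3 * s ^ 2 + 9 * s + 15))"
proof -
  let ?N = std_normal_density
  have "has_bochner_integral lborel (\<lambda>y. p* s^3*(?N y * y^(2*0)) + 3*p* s^2*(?N y * y^(2*1))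
        + 3*p* s*(?N y * y^(2*2)) + p*(?N y * y^(2*3))) (p* s^3*1 + 3*p* s^2*1 + 3*p* s*3 + p*15)"
    by (intro has_bochner_integral_add has_bochner_integral_mult_right mom0 mom1 mom2 mom3)
  moreover have "(\<lambda>y. p* s^3*(?N y * y^(2*0)) + 3*p* s^2*(?N y * y^(2*1))
        + 3*p* s*(?N y * y^(2*2)) + p*(?N y * y^(2*3))) = (\<lambda>y. (s + y\<^sup>2)^3 * p * ?N y)"
    by (rule ext) (simp add: algebra_simps power2_eq_square power3_eq_cube numeral_eq_Suc)
  ultimately show ?thesis
    by (subst nn_from_hb[where r = "p * (s ^ 3 + 3 * s ^ 2 + 9 * s + 15)"]) (auto simp: algebra_simps assms)
qed

lemma inner2:
  assumes "0 \<le> s" "0 \<le> p"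
  shows "(\<integral>\<^sup>+ y. ennreal ((s + y\<^sup>2)^2 * p * std_normal_density y) \<partial>lborel)
     = ennreal (p * (s ^ 2 + 2 * s + 3))"
proof -
  let ?N = std_normal_density
  have "has_bochner_integral lborel (\<lambda>y. p* s^2*(?N y * y^(2*0)) + 2*p* s*(?N y * y^(2*1))
        + p*(?N y * y^(2*2))) (p* s^2*1 + 2*p* s*1 + p*3)"
    by (intro has_bochner_integral_add has_bochner_integral_mult_right mom0 mom1 mom2)
  moreover have "(\<lambda>y. p* s^2*(?N y * y^(2*0)) + 2*p* s*(?N y * y^(2*1))
        + p*(?N y * y^(2*2))) = (\<lambda>y. (s + y\<^sup>2)^2 * p * ?N y)"
    by (rule ext) (simp add: algebra_simps power2_eq_square numeral_eq_Suc)
  ultimately show ?thesis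
    by (subst nn_from_hb[where r = "p * (s ^ 2 + 2 * s + 3)"]) (auto simp: algebra_simps assms)
qed

lemma inner1:
  assumes "0 \<le> s" "0 \<le> p"
  shows "(\<integral>\<^sup>+ y. ennreal ((s + y\<^sup>2)^1 * p * std_normal_density y) \<partial>lborel)
     = ennreal (p * (s + 1))"
proof -
  let ?N = std_normal_density
  have "has_bochner_integral lborel (\<lambda>y. p* s*(?N y * y^(2*0)) + p*(?N y * y^(2*1))) (p* s*1 + p*1)"
    by (intro has_bochner_integral_add has_bochner_integral_mult_right mom0 mom1)
  moreover have "(\<lambda>y. p* s*(?N y * y^(2*0)) + p*(?N y * y^(2*1))) = (\<lambda>y. (s + y\<^sup>2)^1 * p * ?N y)"
    by (rule ext) (simp add: algebra_simps power2_eq_square)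
  ultimately show ?thesis
    by (subst nn_from_hb[where r = "p * (s + 1)"]) (auto simp: algebra_simps assms)
qed

lemma inner0:
  assumes "0 \<le> p"
  shows "(\<integral>\<^sup>+ y. ennreal (p * std_normal_density y) \<partial>lborel)
     = ennreal p"
proof -
  let ?N = std_normal_density
  have "has_bochner_integral lborel (\<lambda>y. p*(?N y * y^(2*0))) (p*1)"
    by (intro has_bochner_integral_add has_bochner_integral_mult_right mom0)
  moreover have "(\<lambda>y. p*(?N y * y^(2*0))) = (\<lambda>y. p * ?N y)"
    by (rule ext) (simp add: algebra_simps)
  ultimately show ?thesis
    by (subst nn_from_hb[where r = "p"]) (auto simp: algebra_simps assms)
qed

lemma SS_nonneg: "0 \<le> SS I \<xi>" unfolding SS_def by (simp add: sum_nonneg)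
lemma PP_nonneg: "0 \<le> PP I \<xi>" unfolding PP_def by (simp add: prod_nonneg normal_density_nonneg)

lemma psf: "product_sigma_finite (\<lambda>_::'b. lborel)"
  by (simp add: product_sigma_finite_def sigma_finite_lborel)

lemma step_ins:
  fixes I :: "'b set"
  assumes "finite I" "i \<notin> I"
  shows "(\<integral>\<^sup>+ \<xi>. ennreal (SS (insert i I) \<xi> ^ k * PP (insert i I) \<xi>) \<partial>PiM (insert i I) (\<lambda>_. lborel))
    = (\<integral>\<^sup>+ x. (\<integral>\<^sup>+ y. ennreal ((SS I x + y\<^sup>2)^k * PP I x * std_normal_density y) \<partial>lborel) \<partial>PiM I (\<lambda>_. lborel))"
proof -
  interpret product_sigma_finite "\<lambda>_::'b. lborel" by (rule psf)
  have e1: "SS (insert i I) (x(i:=y)) = SS I x + y\<^sup>2" for x y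
  proof -
    have "(\<Sum>j\<in>I. ((x(i:=y)) j)\<^sup>2) = (\<Sum>j\<in>I. (x j)\<^sup>2)"
      by (rule sum.cong) (use assms in auto)
    then show ?thesis unfolding SS_def using assms by simp
  qed
  have e2: "PP (insert i I) (x(i:=y)) = PP I x * std_normal_density y" for x y
  proof -
    have "(\<Prod>j\<in>I. std_normal_density ((x(i:=y)) j)) = (\<Prod>j\<in>I. std_normal_density (x j))"
      by (rule prod.cong) (use assms in auto)
    then show ?thesis unfolding PP_def using assms by (simp add: mult.commute)
  qed
  show ?thesis
    by (subst product_nn_integral_insert[OF assms]) (simp_all add: e1 e2 mult.assoc)
qed

definition JJ :: "nat \<Rightarrow> 'b set \<Rightarrow> ennreal" where
  "JJ k I = (\<integral>\<^sup>+ \<xi>. ennreal (SS I \<xi> ^ k * PP I \<xi>) \<partial>PiM I (\<lambda>_. lborel))"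

lemma ennreal_lin4:
  fixes a b c d c0 c1 c2 c3 :: real
  assumes "0 \<le> c3" "0 \<le> c2" "0 \<le> c1" "0 \<le> c0" "0 \<le> a" "0 \<le> b" "0 \<le> c" "0 \<le> d"
  shows "ennreal (c3 * a + c2 * b + c1 * c + c0 * d) = ennreal c3 * ennreal a + ennreal c2 * ennreal b + ennreal c1 * ennreal c + ennreal c0 * ennreal d"
proof -
  have "ennreal (c3 * a + c2 * b + c1 * c + c0 * d) = ennreal (c3 * a + c2 * b + c1 * c) + ennreal (c0 * d)"
    by (rule ennreal_plus) (use assms in auto)
  also have "ennreal (c3 * a + c2 * b + c1 * c) = ennreal (c3 * a + c2 * b) + ennreal (c1 * c)"
    by (rule ennreal_plus) (use assms in auto)
  also have "ennreal (c3 * a + c2 * b) = ennreal (c3 * a) + ennreal (c2 * b)"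
    by (rule ennreal_plus) (use assms in auto)
  finally show ?thesis using assms by (simp add: ennreal_mult)
qed

lemma lin4:
  assumes "0 \<le> c3" "0 \<le> c2" "0 \<le> c1" "0 \<le> c0"
  shows "(\<integral>\<^sup>+ x. ennreal (c3 * (SS I x ^ 3 * PP I x) + c2 * (SS I x ^ 2 * PP I x)
            + c1 * (SS I x ^ 1 * PP I x) + c0 * (SS I x ^ 0 * PP I x)) \<partial>PiM I (\<lambda>_. lborel))
     = ennreal c3 * JJ 3 I + ennreal c2 * JJ 2 I + ennreal c1 * JJ 1 I + ennreal c0 * JJ 0 I"
proof -
  have nn: "0 \<le> SS I x ^ k * PP I x" for x k by (simp add: SS_nonneg PP_nonneg)
  have eq: "(\<lambda>x. ennreal (c3 * (SS I x ^ 3 * PP I x) + c2 * (SS I x ^ 2 * PP I x)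
            + c1 * (SS I x ^ 1 * PP I x) + c0 * (SS I x ^ 0 * PP I x)))
     = (\<lambda>x. ennreal c3 * ennreal (SS I x ^ 3 * PP I x) + ennreal c2 * ennreal (SS I x ^ 2 * PP I x)
            + ennreal c1 * ennreal (SS I x ^ 1 * PP I x) + ennreal c0 * ennreal (SS I x ^ 0 * PP I x))"
    using assms nn by (intro ext ennreal_lin4) (auto simp: SS_nonneg PP_nonneg)
  show ?thesis unfolding JJ_def eq
    apply (subst nn_integral_add, measurable)+
    apply (subst nn_integral_cmult, measurable)+
    done
qed

lemma JJ_empty: "JJ 0 {} = 1" "JJ (Suc k) {} = 0"
  unfolding JJ_def SS_def PP_def by (simp_all add: PiM_empty)

lemma JJ_all:
  fixes I :: "'b set"
  assumes "finite I"
  shows "JJ 0 I = 1 \<and> JJ 1 I = ennreal (real (card I)) \<and>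
         JJ 2 I = ennreal (real (card I)^2 + 2 * real (card I)) \<and>
         JJ 3 I = ennreal (real (card I)^3 + 6 * real (card I)^2 + 8 * real (card I))"
  using assms
proof (induction I rule: finite_induct)
  case empty
  then show ?case using JJ_empty(1) JJ_empty(2)[of 0] JJ_empty(2)[of 1] JJ_empty(2)[of 2] by (simp add: numeral_eq_Suc)
next
  case (insert i I)
  define n where "n = real (card I)"
  have cn: "real (card (insert i I)) = n + 1" using insert by (simp add: n_def)
  have IH: "JJ 0 I = 1" "JJ 1 I = ennreal n" "JJ 2 I = ennreal (n^2 + 2*n)"
     "JJ 3 I = ennreal (n^3 + 6*n^2 + 8*n)" using insert.IH by (simp_all add: n_def)
  have n0: "0 \<le> n" by (simp add: n_def)
  have IH0: "JJ 0 I = ennreal 1" using IH(1) by simp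
  have st: "JJ k (insert i I) = (\<integral>\<^sup>+ x. (\<integral>\<^sup>+ y. ennreal ((SS I x + y\<^sup>2)^k * PP I x * std_normal_density y) \<partial>lborel) \<partial>PiM I (\<lambda>_. lborel))" for k
    unfolding JJ_def by (rule step_ins[OF insert(1,2)])
  have "JJ 0 (insert i I) = (\<integral>\<^sup>+ x. ennreal (0 * (SS I x ^ 3 * PP I x) + 0 * (SS I x ^ 2 * PP I x)
            + 0 * (SS I x ^ 1 * PP I x) + 1 * (SS I x ^ 0 * PP I x)) \<partial>PiM I (\<lambda>_. lborel))"
    unfolding st by (intro nn_integral_cong) (simp add: inner0 PP_nonneg)
  also have "\<dots> = ennreal (0 * (n^3 + 6*n^2 + 8*n) + 0 * (n^2 + 2*n) + 0 * n + 1 * 1)"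
    apply (subst lin4)
    apply (simp_all only: IH0 IH(2-4) order_refl zero_le_one zero_le_numeral)
    apply (rule ennreal_lin4[symmetric])
    apply (simp_all add: n0)
    done
  finally have r0: "JJ 0 (insert i I) = 1" by simp
  have "JJ 1 (insert i I) = (\<integral>\<^sup>+ x. ennreal (0 * (SS I x ^ 3 * PP I x) + 0 * (SS I x ^ 2 * PP I x)
            + 1 * (SS I x ^ 1 * PP I x) + 1 * (SS I x ^ 0 * PP I x)) \<partial>PiM I (\<lambda>_. lborel))"
    unfolding st by (intro nn_integral_cong, subst inner1[OF SS_nonneg PP_nonneg]) (simp add: algebra_simps)
  also have "\<dots> = ennreal (0 * (n^3 + 6*n^2 + 8*n) + 0 * (n^2 + 2*n) + 1 * n + 1 * 1)"
    apply (subst lin4)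
    apply (simp_all only: IH0 IH(2-4) order_refl zero_le_one zero_le_numeral)
    apply (rule ennreal_lin4[symmetric])
    apply (simp_all add: n0)
    done
  also have "\<dots> = ennreal (n + 1)"
    by (rule arg_cong[where f=ennreal]) (simp add: algebra_simps power2_eq_square power3_eq_cube)
  finally have r1: "JJ 1 (insert i I) = ennreal (n + 1)" .
  have "JJ 2 (insert i I) = (\<integral>\<^sup>+ x. ennreal (0 * (SS I x ^ 3 * PP I x) + 1 * (SS I x ^ 2 * PP I x)
            + 2 * (SS I x ^ 1 * PP I x) + 3 * (SS I x ^ 0 * PP I x)) \<partial>PiM I (\<lambda>_. lborel))"
    unfolding st by (intro nn_integral_cong, subst inner2[OF SS_nonneg PP_nonneg]) (simp add: algebra_simps)
  also have "\<dots> = ennreal (0 * (n^3 + 6*n^2 + 8*n) + 1 * (n^2 + 2*n) + 2 * n + 3 * 1)"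
    apply (subst lin4)
    apply (simp_all only: IH0 IH(2-4) order_refl zero_le_one zero_le_numeral)
    apply (rule ennreal_lin4[symmetric])
    apply (simp_all add: n0)
    done
  also have "\<dots> = ennreal ((n+1)^2 + 2 * (n+1))"
    by (rule arg_cong[where f=ennreal]) (simp add: algebra_simps power2_eq_square power3_eq_cube)
  finally have r2: "JJ 2 (insert i I) = ennreal ((n+1)^2 + 2 * (n+1))" .
  have "JJ 3 (insert i I) = (\<integral>\<^sup>+ x. ennreal (1 * (SS I x ^ 3 * PP I x) + 3 * (SS I x ^ 2 * PP I x)
            + 9 * (SS I x ^ 1 * PP I x) + 15 * (SS I x ^ 0 * PP I x)) \<partial>PiM I (\<lambda>_. lborel))"
    unfolding st by (intro nn_integral_cong, subst inner3[OF SS_nonneg PP_nonneg]) (simp add: algebra_simps)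
  also have "\<dots> = ennreal (1 * (n^3 + 6*n^2 + 8*n) + 3 * (n^2 + 2*n) + 9 * n + 15 * 1)"
    apply (subst lin4)
    apply (simp_all only: IH0 IH(2-4) order_refl zero_le_one zero_le_numeral)
    apply (rule ennreal_lin4[symmetric])
    apply (simp_all add: n0)
    done
  also have "\<dots> = ennreal ((n+1)^3 + 6 * (n+1)^2 + 8 * (n+1))"
    by (rule arg_cong[where f=ennreal]) (simp add: algebra_simps power2_eq_square power3_eq_cube)
  finally have r3: "JJ 3 (insert i I) = ennreal ((n+1)^3 + 6 * (n+1)^2 + 8 * (n+1))" .
  show ?case unfolding cn using r0 r1 r2 r3 by simp
qed

lemma norm_sum_Basis_sq:
  "(norm (\<Sum>b\<in>(Basis::'a::euclidean_space set). \<xi> b *\<^sub>R b))\<^sup>2 = SS (Basis::'a set) \<xi>"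
proof -
  let ?v = "(\<Sum>b\<in>(Basis::'a set). \<xi> b *\<^sub>R b)"
  have "(norm ?v)\<^sup>2 = ?v \<bullet> ?v" by (simp add: power2_norm_eq_inner)
  also have "\<dots> = (\<Sum>b\<in>Basis. (?v \<bullet> b) * (?v \<bullet> b))" by (rule euclidean_inner)
  also have "\<dots> = SS Basis \<xi>" unfolding SS_def
    by (rule sum.cong) (simp_all add: power2_eq_square)
  finally show ?thesis .
qed

lemma dens_PP:
  "(2 * pi) powr (- real DIM('a::euclidean_space) / 2) * exp (- SS (Basis::'a set) \<xi> / 2) = PP (Basis::'a set) \<xi>"
proof -
  have "PP (Basis::'a set) \<xi> = (\<Prod>b\<in>(Basis::'a set). (1 / sqrt (2 * pi)) * exp (- (\<xi> b)\<^sup>2 / 2))"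
    unfolding PP_def std_normal_density_def ..
  also have "\<dots> = (1 / sqrt (2 * pi)) ^ DIM('a) * (\<Prod>b\<in>(Basis::'a set). exp (- (\<xi> b)\<^sup>2 / 2))"
    by (simp only: prod.distrib prod_constant)
  also have "(\<Prod>b\<in>(Basis::'a set). exp (- (\<xi> b)\<^sup>2 / 2)) = exp (\<Sum>b\<in>(Basis::'a set). - (\<xi> b)\<^sup>2 / 2)"
    by (rule exp_sum[symmetric]) simp
  also have "(\<Sum>b\<in>(Basis::'a set). - (\<xi> b)\<^sup>2 / 2) = - SS (Basis::'a set) \<xi> / 2"
    unfolding SS_def by (subst sum_divide_distrib[symmetric]) (simp add: sum_negf)
  also have "(1 / sqrt (2 * pi)) ^ DIM('a) = (2 * pi) powr (- real DIM('a) / 2)"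
  proof -
    have "(2 * pi) powr (- real DIM('a) / 2) = ((2 * pi) powr (1/2)) powr (- real DIM('a))"
      by (simp only: powr_powr) simp
    also have "(2 * pi) powr (1/2) = sqrt (2 * pi)" by (rule powr_half_sqrt) simp
    also have "sqrt (2 * pi) powr (- real DIM('a)) = inverse (sqrt (2 * pi) powr (real DIM('a)))"
      by (rule powr_minus)
    also have "sqrt (2 * pi) powr (real DIM('a)) = sqrt (2 * pi) ^ DIM('a)"
      by (rule powr_realpow) simp
    finally show ?thesis by (simp add: power_one_over inverse_eq_divide)
  qed
  finally show ?thesis by (simp only: mult.commute)
qed

lemma gauss_JJ:
  "(\<integral>\<^sup>+ u. ennreal (((norm u)\<^sup>2)^k) \<partial>(std_gaussian::'a::euclidean_space measure)) = JJ k (Basis::'a set)"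
proof -
  let ?T = "\<lambda>f. \<Sum>b\<in>(Basis::'a set). f b *\<^sub>R b"
  have Tm: "?T \<in> measurable (PiM Basis (\<lambda>_. lborel)) borel" by measurable
  have "(\<integral>\<^sup>+ u. ennreal (((norm u)\<^sup>2)^k) \<partial>(std_gaussian::'a measure))
     = (\<integral>\<^sup>+ u. ennreal ((2 * pi) powr (- real DIM('a) / 2) * exp (- (norm u)\<^sup>2 / 2)) * ennreal (((norm u)\<^sup>2)^k) \<partial>(lborel::'a measure))"
    unfolding std_gaussian_def by (rule nn_integral_density) measurable
  also have "\<dots> = (\<integral>\<^sup>+ u. ennreal ((2 * pi) powr (- real DIM('a) / 2) * exp (- (norm u)\<^sup>2 / 2)) * ennreal (((norm u)\<^sup>2)^k) \<partial>(distr (PiM Basis (\<lambda>_. lborel)) borel ?T))"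
    by (simp only: lborel_eq[where 'a='a, symmetric])
  also have "\<dots> = (\<integral>\<^sup>+ \<xi>. ennreal ((2 * pi) powr (- real DIM('a) / 2) * exp (- (norm (?T \<xi>))\<^sup>2 / 2)) * ennreal (((norm (?T \<xi>))\<^sup>2)^k) \<partial>(PiM Basis (\<lambda>_. lborel)))"
    by (rule nn_integral_distr[OF Tm]) measurable
  also have "\<dots> = JJ k (Basis::'a set)" unfolding JJ_def norm_sum_Basis_sq
  proof (rule nn_integral_cong)
    fix \<xi> :: "'a \<Rightarrow> real"
    show "ennreal ((2 * pi) powr (- real DIM('a) / 2) * exp (- SS Basis \<xi> / 2)) * ennreal (SS Basis \<xi> ^ k)
      = ennreal (SS Basis \<xi> ^ k * PP Basis \<xi>)"
      unfolding dens_PP by (simp add: ennreal_mult'[symmetric] SS_nonneg PP_nonneg mult.commute)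
  qed
  finally show ?thesis .
qed





lemma D_int:
  fixes D :: "real measure"
  assumes D_prob: "prob_space D" and D_sets: "sets D = sets borel"
    and supp: "AE v in D. \<bar>v\<bar> \<le> a"
    and mean: "prob_space.expectation D (\<lambda>v. v) = 0"
    and var: "prob_space.variance D (\<lambda>v. v) = \<sigma>\<^sup>2"
    and K: "0 \<le> K" and E: "0 \<le> E"
  shows "(\<integral>\<^sup>+ v. ennreal ((c + d * v)\<^sup>2 * K + E) \<partial>D) = ennreal ((c\<^sup>2 + d\<^sup>2 * \<sigma>\<^sup>2) * K + E)"
proof -
  interpret prob_space D by (rule D_prob)
  have mD: "measurable D borel = measurable borel borel"
    by (rule measurable_cong_sets) (simp_all add: D_sets)
  have i1: "integrable D (\<lambda>v. v)"
  proof (rule integrable_const_bound[where B=a])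
    show "AE x in D. norm x \<le> a" using supp by simp
    show "(\<lambda>v. v) \<in> borel_measurable D" unfolding mD by simp
  qed
  have i2: "integrable D (\<lambda>v. v\<^sup>2)"
  proof (rule integrable_const_bound[where B="a\<^sup>2"])
    show "AE x in D. norm (x\<^sup>2) \<le> a\<^sup>2"
    proof (rule eventually_mono[OF supp])
      fix v :: real assume "\<bar>v\<bar> \<le> a"
      then have "\<bar>v\<bar>^2 \<le> a^2" by (intro power_mono) simp_all
      then show "norm (v\<^sup>2) \<le> a\<^sup>2" by simp
    qed
    show "(\<lambda>v. v\<^sup>2) \<in> borel_measurable D" unfolding mD by simp
  qed
  have e2: "integral\<^sup>L D (\<lambda>v. v\<^sup>2) = \<sigma>\<^sup>2" using var mean by simp
  have eq: "(\<lambda>v. (c + d * v)\<^sup>2 * K + E) = (\<lambda>v. (c\<^sup>2 * K + E) + (2 * c * d * K) * v + (d\<^sup>2 * K) * v\<^sup>2)"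
    by (rule ext) (simp add: power2_eq_square algebra_simps)
  have int: "integrable D (\<lambda>v. (c + d * v)\<^sup>2 * K + E)" unfolding eq
    by (simp add: i1 i2)
  have "integral\<^sup>L D (\<lambda>v. (c + d * v)\<^sup>2 * K + E) = (c\<^sup>2 + d\<^sup>2 * \<sigma>\<^sup>2) * K + E"
  proof -
    have "integral\<^sup>L D (\<lambda>v. (c\<^sup>2 * K + E) + (2 * c * d * K) * v + (d\<^sup>2 * K) * v\<^sup>2)
        = integral\<^sup>L D (\<lambda>v. (c\<^sup>2 * K + E) + (2 * c * d * K) * v) + integral\<^sup>L D (\<lambda>v. (d\<^sup>2 * K) * v\<^sup>2)"
      by (rule Bochner_Integration.integral_add[where f="\<lambda>v. (c\<^sup>2 * K + E) + (2 * c * d * K) * v" and g="\<lambda>v. (d\<^sup>2 * K) * v\<^sup>2"]) (simp_all add: i1 i2)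
    also have "integral\<^sup>L D (\<lambda>v. (c\<^sup>2 * K + E) + (2 * c * d * K) * v)
        = integral\<^sup>L D (\<lambda>v. (c\<^sup>2 * K + E)) + integral\<^sup>L D (\<lambda>v. (2 * c * d * K) * v)"
      by (rule Bochner_Integration.integral_add[where f="\<lambda>v. (c\<^sup>2 * K + E)" and g="\<lambda>v. (2 * c * d * K) * v"]) (simp_all add: i1 i2)
    also have "integral\<^sup>L D (\<lambda>v. (c\<^sup>2 * K + E)) = c\<^sup>2 * K + E"
      using prob_space by simp
    also have "integral\<^sup>L D (\<lambda>v. (2 * c * d * K) * v) = 0"
      using mean by simp
    also have "integral\<^sup>L D (\<lambda>v. (d\<^sup>2 * K) * v\<^sup>2) = d\<^sup>2 * K * \<sigma>\<^sup>2"
      using e2 by simp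
    finally show ?thesis unfolding eq by (simp add: algebra_simps)
  qed
  moreover have "AE v in D. 0 \<le> (c + d * v)\<^sup>2 * K + E" using K E by simp
  ultimately show ?thesis using nn_integral_eq_integral[OF int] by metis
qed

lemma taylor_bd:
  fixes f :: "'a::euclidean_space \<Rightarrow> real" and g :: "'a \<Rightarrow> 'a"
  assumes grad: "\<And>y. (f has_derivative (\<lambda>h. g y \<bullet> h)) (at y)"
    and lip1: "\<And>y z. norm (g y - g z) \<le> L1 * norm (y - z)"
  shows "\<bar>f (x + h) - f x - g x \<bullet> h\<bar> \<le> L1 / 2 * (norm h)\<^sup>2"
proof -
  have dphi: "((\<lambda>t. f (x + t *\<^sub>R h)) has_real_derivative (g (x + t *\<^sub>R h) \<bullet> h)) (at t)" for t
  proof -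
    have "((\<lambda>t. x + t *\<^sub>R h) has_derivative (\<lambda>s. s *\<^sub>R h)) (at t)"
      by (auto intro!: derivative_eq_intros)
    from has_derivative_compose[OF this grad]
    have "((\<lambda>t. f (x + t *\<^sub>R h)) has_derivative (\<lambda>s. g (x + t *\<^sub>R h) \<bullet> (s *\<^sub>R h))) (at t)" .
    moreover have "(\<lambda>s. g (x + t *\<^sub>R h) \<bullet> (s *\<^sub>R h)) = (*) (g (x + t *\<^sub>R h) \<bullet> h)"
      by (rule ext) simp
    ultimately show ?thesis by (simp add: has_field_derivative_def)
  qed
  have gb: "\<bar>(g (x + t *\<^sub>R h) - g x) \<bullet> h\<bar> \<le> L1 * t * (norm h)\<^sup>2" if "0 \<le> t" for t
  proof -
    have "\<bar>(g (x + t *\<^sub>R h) - g x) \<bullet> h\<bar> \<le> norm (g (x + t *\<^sub>R h) - g x) * norm h"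
      by (rule Cauchy_Schwarz_ineq2)
    also have "\<dots> \<le> L1 * norm (t *\<^sub>R h) * norm h"
      using lip1[of "x + t *\<^sub>R h" x] by (simp add: mult_right_mono)
    also have "\<dots> = L1 * t * (norm h)\<^sup>2" using that by (simp add: power2_eq_square)
    finally show ?thesis .
  qed
  let ?c = "g x \<bullet> h" and ?q = "L1 / 2 * (norm h)\<^sup>2"
  have up: "(\<lambda>t. f (x + t *\<^sub>R h) - t * ?c - t\<^sup>2 * ?q) 1 \<le> (\<lambda>t. f (x + t *\<^sub>R h) - t * ?c - t\<^sup>2 * ?q) 0"
  proof (rule DERIV_nonpos_imp_nonincreasing[of 0 1])
    fix t :: real assume t: "0 \<le> t" "t \<le> 1"
    have "((\<lambda>t. f (x + t *\<^sub>R h) - t * ?c - t\<^sup>2 * ?q) has_real_derivative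
        (g (x + t *\<^sub>R h) \<bullet> h - ?c - 2 * t * ?q)) (at t)"
      by (auto intro!: derivative_eq_intros dphi)
    moreover have "g (x + t *\<^sub>R h) \<bullet> h - ?c - 2 * t * ?q \<le> 0"
      using gb[OF t(1)] by (simp add: inner_diff_left abs_le_iff algebra_simps)
    ultimately show "\<exists>y. ((\<lambda>t. f (x + t *\<^sub>R h) - t * ?c - t\<^sup>2 * ?q) has_real_derivative y) (at t) \<and> y \<le> 0"
      by blast
  qed simp
  have lo: "(\<lambda>t. f (x + t *\<^sub>R h) - t * ?c + t\<^sup>2 * ?q) 0 \<le> (\<lambda>t. f (x + t *\<^sub>R h) - t * ?c + t\<^sup>2 * ?q) 1"
  proof (rule DERIV_nonneg_imp_nondecreasing[of 0 1])
    fix t :: real assume t: "0 \<le> t" "t \<le> 1"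
    have "((\<lambda>t. f (x + t *\<^sub>R h) - t * ?c + t\<^sup>2 * ?q) has_real_derivative
        (g (x + t *\<^sub>R h) \<bullet> h - ?c + 2 * t * ?q)) (at t)"
      by (auto intro!: derivative_eq_intros dphi)
    moreover have "0 \<le> g (x + t *\<^sub>R h) \<bullet> h - ?c + 2 * t * ?q"
      using gb[OF t(1)] by (simp add: inner_diff_left abs_le_iff algebra_simps)
    ultimately show "\<exists>y. ((\<lambda>t. f (x + t *\<^sub>R h) - t * ?c + t\<^sup>2 * ?q) has_real_derivative y) (at t) \<and> 0 \<le> y"
      by blast
  qed simp
  show ?thesis using up lo by (simp only: abs_le_iff) simp
qed




lemma real_final:
  fixes n L0 L1 \<sigma> F t :: real
  assumes n1: "1 \<le> n" and L1: "0 < L1" and \<sigma>: "0 < \<sigma>" and F: "0 < F"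
    and t: "t = (16 * \<sigma>\<^sup>2 * n / (L1\<^sup>2 * (1 + 3 * \<sigma>\<^sup>2) * (n + 6) ^ 3)) powr (1 / 4)"
  shows "(L1\<^sup>2 * (t * sqrt F)\<^sup>2 / 4) * (n^3 + 6*n^2 + 8*n) + (3 * L0\<^sup>2 * \<sigma>\<^sup>2) * (n^2 + 2*n)
          + (5/2 * \<sigma>\<^sup>2 * F\<^sup>2 / (t * sqrt F)\<^sup>2) * n
     \<le> 2 * L1 * \<sigma> * sqrt ((1 + 3 * \<sigma>\<^sup>2) * n * (n + 6) ^ 3) * F + 3 * L0\<^sup>2 * \<sigma>\<^sup>2 * (n + 4)\<^sup>2"
proof -
  define s where "s = sqrt (1 + 3 * \<sigma>\<^sup>2)"
  define r where "r = sqrt n"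
  define W where "W = sqrt ((n + 6) ^ 3)"
  have s1: "1 \<le> s" unfolding s_def by simp
  have s2: "s\<^sup>2 = 1 + 3 * \<sigma>\<^sup>2" unfolding s_def by (simp add: add_nonneg_nonneg)
  have r0: "0 < r" unfolding r_def using n1 by simp
  have r2: "r\<^sup>2 = n" unfolding r_def using n1 by simp
  have W0: "0 < W" unfolding W_def using n1 by simp
  have W2: "W\<^sup>2 = (n + 6) ^ 3" unfolding W_def using n1 by simp
  define X where "X = 16 * \<sigma>\<^sup>2 * n / (L1\<^sup>2 * (1 + 3 * \<sigma>\<^sup>2) * (n + 6) ^ 3)"
  have X0: "0 < X" unfolding X_def using n1 L1 \<sigma> by (simp add: add_pos_nonneg)
  have X_eq: "X = (4 * \<sigma> * r / (L1 * s * W))\<^sup>2"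
    unfolding X_def using r2 s2 W2 by (simp add: power_mult_distrib power_divide)
  have t2: "t\<^sup>2 = 4 * \<sigma> * r / (L1 * s * W)"
  proof -
    have "t\<^sup>2 = X powr (1/4) * X powr (1/4)" unfolding t X_def[symmetric] by (simp add: power2_eq_square)
    also have "\<dots> = X powr (1/2)" by (simp add: powr_add[symmetric])
    also have "\<dots> = sqrt X" using X0 by (simp add: powr_half_sqrt)
    also have "\<dots> = 4 * \<sigma> * r / (L1 * s * W)" unfolding X_eq
      using \<sigma> r0 L1 s1 W0 by simp
    finally show ?thesis .
  qed
  have tpos: "0 < t\<^sup>2" unfolding t2 using \<sigma> r0 L1 s1 W0 by simp
  have mu2: "(t * sqrt F)\<^sup>2 = t\<^sup>2 * F" using F by (simp add: power_mult_distrib)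
  have sq: "sqrt ((1 + 3 * \<sigma>\<^sup>2) * n * (n + 6) ^ 3) = s * r * W"
    unfolding s_def r_def W_def by (simp add: real_sqrt_mult)
  have m3: "n^3 + 6*n^2 + 8*n \<le> W\<^sup>2" unfolding W2 using n1 by (simp add: power3_eq_cube power2_eq_square algebra_simps)
  have m2: "n^2 + 2*n \<le> (n + 4)\<^sup>2" using n1 by (simp add: power2_eq_square algebra_simps)
  have T1: "(L1\<^sup>2 * (t * sqrt F)\<^sup>2 / 4) * (n^3 + 6*n^2 + 8*n) \<le> L1 * \<sigma> * r * W * F / s"
  proof -
    have "(L1\<^sup>2 * (t * sqrt F)\<^sup>2 / 4) * (n^3 + 6*n^2 + 8*n) \<le> (L1\<^sup>2 * (t * sqrt F)\<^sup>2 / 4) * W\<^sup>2"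
      by (rule mult_left_mono[OF m3]) simp
    also have "\<dots> = L1 * \<sigma> * r * W * F / s" unfolding mu2 t2
      using L1 s1 W0 by (simp add: field_simps power2_eq_square)
    finally show ?thesis .
  qed
  have T2: "(3 * L0\<^sup>2 * \<sigma>\<^sup>2) * (n^2 + 2*n) \<le> 3 * L0\<^sup>2 * \<sigma>\<^sup>2 * (n + 4)\<^sup>2"
    by (rule mult_left_mono[OF m2]) simp
  have T3: "(5/2 * \<sigma>\<^sup>2 * F\<^sup>2 / (t * sqrt F)\<^sup>2) * n = 5/8 * L1 * \<sigma> * s * r * W * F"
    unfolding mu2 t2 using L1 s1 W0 r0 F \<sigma> r2[symmetric]
    by (simp add: field_simps power2_eq_square)
  have T4: "L1 * \<sigma> * r * W * F / s + 5/8 * L1 * \<sigma> * s * r * W * F \<le> 2 * L1 * \<sigma> * (s * r * W) * F"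
  proof -
    have P: "0 < L1 * \<sigma> * r * W * F" using L1 \<sigma> r0 W0 F by simp
    have ss: "1 \<le> s * s" using mult_mono[OF s1 s1] s1 by simp
    have "1 / s + 5/8 * s \<le> 2 * s" using s1 ss by (simp add: field_simps)
    then have "(L1 * \<sigma> * r * W * F) * (1 / s + 5/8 * s) \<le> (L1 * \<sigma> * r * W * F) * (2 * s)"
      by (rule mult_left_mono) (use P in simp)
    then show ?thesis by (simp add: algebra_simps)
  qed
  show ?thesis unfolding sq using T1 T2 T3 T4 by linarith
qed




lemma pointwise_bd:
  fixes A P Q S c6 \<sigma> L0 L1 \<mu> fx :: real
  assumes S: "0 \<le> S" and mu: "0 < \<mu>"
    and A: "\<bar>A\<bar> \<le> L1 * \<mu> * S / 2"
    and PQ: "P\<^sup>2 + Q\<^sup>2 \<le> 5/2 * fx\<^sup>2 / \<mu>\<^sup>2 + 3 * L0\<^sup>2 * S"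
  shows "(A\<^sup>2 + P\<^sup>2 * \<sigma>\<^sup>2) * S + Q\<^sup>2 * \<sigma>\<^sup>2 * S
     \<le> (L1\<^sup>2 * \<mu>\<^sup>2 / 4) * S ^ 3 + (3 * L0\<^sup>2 * \<sigma>\<^sup>2) * S ^ 2 + (5/2 * \<sigma>\<^sup>2 * fx\<^sup>2 / \<mu>\<^sup>2) * S ^ 1"
proof -
  have "A\<^sup>2 \<le> (L1 * \<mu> * S / 2)\<^sup>2"
    using A by (metis abs_ge_zero abs_le_square_iff abs_of_nonneg order_trans power2_abs)
  then have a: "A\<^sup>2 * S \<le> (L1 * \<mu> * S / 2)\<^sup>2 * S" by (rule mult_right_mono) (rule S)
  have b: "(P\<^sup>2 + Q\<^sup>2) * (\<sigma>\<^sup>2 * S) \<le> (5/2 * fx\<^sup>2 / \<mu>\<^sup>2 + 3 * L0\<^sup>2 * S) * (\<sigma>\<^sup>2 * S)"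
    by (rule mult_right_mono[OF PQ]) (simp add: S)
  have "(A\<^sup>2 + P\<^sup>2 * \<sigma>\<^sup>2) * S + Q\<^sup>2 * \<sigma>\<^sup>2 * S = A\<^sup>2 * S + (P\<^sup>2 + Q\<^sup>2) * (\<sigma>\<^sup>2 * S)"
    by (simp add: algebra_simps)
  also have "\<dots> \<le> (L1 * \<mu> * S / 2)\<^sup>2 * S + (5/2 * fx\<^sup>2 / \<mu>\<^sup>2 + 3 * L0\<^sup>2 * S) * (\<sigma>\<^sup>2 * S)"
    using a b by linarith
  also have "\<dots> = (L1\<^sup>2 * \<mu>\<^sup>2 / 4) * S ^ 3 + (3 * L0\<^sup>2 * \<sigma>\<^sup>2) * S ^ 2 + (5/2 * \<sigma>\<^sup>2 * fx\<^sup>2 / \<mu>\<^sup>2) * S ^ 1"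
    by (simp add: power2_eq_square power3_eq_cube algebra_simps)
  finally show ?thesis .
qed

lemma sq_bd:
  fixes a d c :: real
  assumes "\<bar>d\<bar> \<le> c"
  shows "(a + d)\<^sup>2 \<le> 3/2 * a\<^sup>2 + 3 * c\<^sup>2"
proof -
  have "d\<^sup>2 \<le> c\<^sup>2" using assms by (metis abs_ge_zero abs_le_square_iff abs_of_nonneg order_trans power2_abs)
  moreover have "0 \<le> (a - 2*d)\<^sup>2 / 2" by simp
  ultimately show ?thesis by (simp add: power2_eq_square algebra_simps)
qed

lemma ennreal_lin3:
  fixes a b c c1 c2 c3 :: real
  assumes "0 \<le> c3" "0 \<le> c2" "0 \<le> c1" "0 \<le> a" "0 \<le> b" "0 \<le> c"
  shows "ennreal (c3 * a + c2 * b + c1 * c) = ennreal c3 * ennreal a + ennreal c2 * ennreal b + ennreal c1 * ennreal c"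
proof -
  have "ennreal (c3 * a + c2 * b + c1 * c) = ennreal (c3 * a + c2 * b) + ennreal (c1 * c)"
    by (rule ennreal_plus) (use assms in auto)
  also have "ennreal (c3 * a + c2 * b) = ennreal (c3 * a) + ennreal (c2 * b)"
    by (rule ennreal_plus) (use assms in auto)
  finally show ?thesis using assms by (simp add: ennreal_mult)
qed

lemma gauss_lin:
  fixes c1 c2 c3 :: real
  assumes "0 \<le> c3" "0 \<le> c2" "0 \<le> c1"
  shows "(\<integral>\<^sup>+ u. ennreal (c3 * ((norm u)\<^sup>2)^3 + c2 * ((norm u)\<^sup>2)^2 + c1 * ((norm u)\<^sup>2)^1) \<partial>(std_gaussian::'a::euclidean_space measure))
    = ennreal (c3 * (real DIM('a)^3 + 6 * real DIM('a)^2 + 8 * real DIM('a))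
              + c2 * (real DIM('a)^2 + 2 * real DIM('a)) + c1 * real DIM('a))"
proof -
  let ?G = "std_gaussian::'a measure"
  have JJ: "JJ 1 (Basis::'a set) = ennreal (real DIM('a))"
     "JJ 2 (Basis::'a set) = ennreal (real DIM('a)^2 + 2 * real DIM('a))"
     "JJ 3 (Basis::'a set) = ennreal (real DIM('a)^3 + 6 * real DIM('a)^2 + 8 * real DIM('a))"
    using JJ_all[of "Basis::'a set"] by simp_all
  have eq: "(\<lambda>u::'a. ennreal (c3 * ((norm u)\<^sup>2)^3 + c2 * ((norm u)\<^sup>2)^2 + c1 * ((norm u)\<^sup>2)^1))
     = (\<lambda>u. ennreal c3 * ennreal (((norm u)\<^sup>2)^3) + ennreal c2 * ennreal (((norm u)\<^sup>2)^2) + ennreal c1 * ennreal (((norm u)\<^sup>2)^1))"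
    using assms by (intro ext ennreal_lin3) auto
  have mG: "measurable ?G borel = measurable borel borel"
    by (rule measurable_cong_sets) (simp_all add: std_gaussian_def)
  have m: "(\<lambda>u::'a. ennreal c * ennreal (((norm u)\<^sup>2)^k)) \<in> borel_measurable ?G" for c k
    unfolding mG by measurable
  have "(\<integral>\<^sup>+ u. ennreal (c3 * ((norm u)\<^sup>2)^3 + c2 * ((norm u)\<^sup>2)^2 + c1 * ((norm u)\<^sup>2)^1) \<partial>?G)
     = ennreal c3 * JJ 3 (Basis::'a set) + ennreal c2 * JJ 2 (Basis::'a set) + ennreal c1 * JJ 1 (Basis::'a set)"
    unfolding eq gauss_JJ[symmetric]
    apply (subst nn_integral_add, (intro borel_measurable_add m)?, rule m)+
    apply (subst nn_integral_cmult, unfold mG, measurable)+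
    done
  also have "\<dots> = ennreal (c3 * (real DIM('a)^3 + 6 * real DIM('a)^2 + 8 * real DIM('a))
              + c2 * (real DIM('a)^2 + 2 * real DIM('a)) + c1 * real DIM('a))"
    unfolding JJ by (rule ennreal_lin3[symmetric]) (use assms in auto)
  finally show ?thesis .
qed




theorem theorem3:
  fixes f :: "'a::euclidean_space \<Rightarrow> real" and g :: "'a \<Rightarrow> 'a"
    and D :: "real measure" and L0 L1 \<sigma> a b :: real and x :: 'a
  assumes conv: "convex_on UNIV f"
    and grad: "\<And>y. (f has_derivative (\<lambda>h. g y \<bullet> h)) (at y)"
    and grad_cont: "continuous_on UNIV g"
    and lip0: "\<And>y z. \<bar>f y - f z\<bar> \<le> L0 * norm (y - z)"
    and lip1: "\<And>y z. norm (g y - g z) \<le> L1 * norm (y - z)"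
    and L1_pos: "L1 > 0"
    and D_prob: "prob_space D" and D_sets: "sets D = sets borel"
    and supp: "AE v in D. \<bar>v\<bar> \<le> a" and a_lt: "a < 1"
    and mean: "prob_space.expectation D (\<lambda>v. v) = 0"
    and var: "prob_space.variance D (\<lambda>v. v) = \<sigma>\<^sup>2" and \<sigma>_pos: "\<sigma> > 0"
    and inv_bound: "prob_space.expectation D (\<lambda>v. 1 / (1 + v)) \<le> b"
    and fx: "f x \<noteq> 0"
  shows
    "(let n = real DIM('a);
          C4 = (16 * \<sigma>\<^sup>2 * n / (L1\<^sup>2 * (1 + 3 * \<sigma>\<^sup>2) * (n + 6) ^ 3)) powr (1 / 4);
          \<mu> = C4 * sqrt \<bar>f x\<bar>
      in (\<integral>\<^sup>+ (u, v1, v2). ennreal (est_err f g x \<mu> u v1 v2)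
             \<partial>(std_gaussian \<Otimes>\<^sub>M (D \<Otimes>\<^sub>M D)))
         \<le> ennreal (2 * L1 * \<sigma> * sqrt ((1 + 3 * \<sigma>\<^sup>2) * n * (n + 6) ^ 3) * \<bar>f x\<bar>
                    + 3 * L0\<^sup>2 * \<sigma>\<^sup>2 * (n + 4)\<^sup>2))"
proof -
  define n where "n = real DIM('a)"
  define C4 where "C4 = (16 * \<sigma>\<^sup>2 * n / (L1\<^sup>2 * (1 + 3 * \<sigma>\<^sup>2) * (n + 6) ^ 3)) powr (1 / 4)"
  define \<mu> where "\<mu> = C4 * sqrt \<bar>f x\<bar>"
  define F where "F = \<bar>f x\<bar>"
  let ?G = "std_gaussian :: 'a measure"
  have n1: "1 \<le> n" unfolding n_def by (simp add: DIM_positive Suc_le_eq)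
  have F0: "0 < F" unfolding F_def using fx by simp
  have p3: "0 < 1 + 3 * \<sigma>\<^sup>2" by (simp add: add_pos_nonneg)
  have "0 < 16 * \<sigma>\<^sup>2 * n / (L1\<^sup>2 * (1 + 3 * \<sigma>\<^sup>2) * (n + 6) ^ 3)"
    using n1 L1_pos \<sigma>_pos p3 by (intro divide_pos_pos mult_pos_pos) auto
  then have C40: "0 < C4" unfolding C4_def by (simp only: powr_gt_zero)
  have mu0: "0 < \<mu>" unfolding \<mu>_def using C40 fx by simp
  have f_cont: "continuous_on UNIV f"
    by (rule continuous_at_imp_continuous_on) (use grad has_derivative_continuous in blast)
  have fm[measurable]: "f \<in> borel_measurable borel" by (rule borel_measurable_continuous_onI[OF f_cont])
  have gm[measurable]: "g \<in> borel_measurable borel" by (rule borel_measurable_continuous_onI[OF grad_cont])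
  have sfD: "sigma_finite_measure D" by (rule prob_space_imp_sigma_finite[OF D_prob])
  have sfDD: "sigma_finite_measure (D \<Otimes>\<^sub>M D)"
    by (rule prob_space_imp_sigma_finite[OF prob_space_pair[OF D_prob D_prob]])
  have mG: "sets ?G = sets borel" unfolding std_gaussian_def by simp
  let ?h = "\<lambda>(u, v1, v2). ennreal (est_err f g x \<mu> u v1 v2)"
  have hm: "?h \<in> borel_measurable (?G \<Otimes>\<^sub>M (D \<Otimes>\<^sub>M D))"
  proof -
    have h1: "?h \<in> borel_measurable (borel \<Otimes>\<^sub>M (borel \<Otimes>\<^sub>M borel))"
      unfolding est_err_def by measurable
    have h2: "sets (?G \<Otimes>\<^sub>M (D \<Otimes>\<^sub>M D)) = sets ((borel::'a measure) \<Otimes>\<^sub>M ((borel::real measure) \<Otimes>\<^sub>M (borel::real measure)))"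
      by (intro sets_pair_measure_cong mG D_sets)
    show ?thesis unfolding measurable_cong_sets[OF h2 refl] by (rule h1)
  qed
  define A where "A u = (f (x + \<mu> *\<^sub>R u) - f x) / \<mu> - g x \<bullet> u" for u
  define P where "P u = f (x + \<mu> *\<^sub>R u) / \<mu>" for u
  define Q where "Q = f x / \<mu>"
  have err_eq: "est_err f g x \<mu> u v1 v2 = (A u + P u * v1 + (- Q) * v2)\<^sup>2 * (norm u)\<^sup>2" for u v1 v2
  proof -
    have "est_err f g x \<mu> u v1 v2 = (norm (((f (x + \<mu> *\<^sub>R u) * (1 + v1) - f x * (1 + v2)) / \<mu> - g x \<bullet> u) *\<^sub>R u))\<^sup>2"
      unfolding est_err_def by (simp add: scaleR_diff_left)
    also have "\<dots> = ((f (x + \<mu> *\<^sub>R u) * (1 + v1) - f x * (1 + v2)) / \<mu> - g x \<bullet> u)\<^sup>2 * (norm u)\<^sup>2"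
      by (simp add: power_mult_distrib)
    also have "(f (x + \<mu> *\<^sub>R u) * (1 + v1) - f x * (1 + v2)) / \<mu> - g x \<bullet> u = A u + P u * v1 + (- Q) * v2"
      unfolding A_def P_def Q_def using mu0 by (simp add: field_simps)
    finally show ?thesis .
  qed
  have step1: "(\<integral>\<^sup>+ (u, v1, v2). ennreal (est_err f g x \<mu> u v1 v2) \<partial>(?G \<Otimes>\<^sub>M (D \<Otimes>\<^sub>M D)))
     = (\<integral>\<^sup>+ u. (\<integral>\<^sup>+ w. ?h (u, w) \<partial>(D \<Otimes>\<^sub>M D)) \<partial>?G)"
    by (rule sigma_finite_measure.nn_integral_fst[OF sfDD hm, symmetric])
  have step2: "(\<integral>\<^sup>+ w. ?h (u, w) \<partial>(D \<Otimes>\<^sub>M D)) = ennreal (((A u)\<^sup>2 + (P u)\<^sup>2 * \<sigma>\<^sup>2) * (norm u)\<^sup>2 + Q\<^sup>2 * \<sigma>\<^sup>2 * (norm u)\<^sup>2)" for u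
  proof -
    let ?k = "\<lambda>(v1, v2). ennreal (est_err f g x \<mu> u v1 v2)"
    have km: "?k \<in> borel_measurable (D \<Otimes>\<^sub>M D)"
    proof -
      have k1: "?k \<in> borel_measurable ((borel::real measure) \<Otimes>\<^sub>M (borel::real measure))"
        unfolding est_err_def by measurable
      have k2: "sets (D \<Otimes>\<^sub>M D) = sets ((borel::real measure) \<Otimes>\<^sub>M (borel::real measure))"
        by (intro sets_pair_measure_cong D_sets)
      show ?thesis unfolding measurable_cong_sets[OF k2 refl] by (rule k1)
    qed
    have "(\<integral>\<^sup>+ w. ?h (u, w) \<partial>(D \<Otimes>\<^sub>M D)) = (\<integral>\<^sup>+ w. ?k w \<partial>(D \<Otimes>\<^sub>M D))"
      by (rule nn_integral_cong) auto
    also have "\<dots> = (\<integral>\<^sup>+ v1. (\<integral>\<^sup>+ v2. ?k (v1, v2) \<partial>D) \<partial>D)"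
      by (rule sigma_finite_measure.nn_integral_fst[OF sfD km, symmetric])
    also have "\<dots> = (\<integral>\<^sup>+ v1. ennreal (((A u + P u * v1)\<^sup>2 + (- Q)\<^sup>2 * \<sigma>\<^sup>2) * (norm u)\<^sup>2 + 0) \<partial>D)"
    proof (rule nn_integral_cong)
      fix v1 :: real
      have "(\<integral>\<^sup>+ v2. ?k (v1, v2) \<partial>D) = (\<integral>\<^sup>+ v2. ennreal (((A u + P u * v1) + (- Q) * v2)\<^sup>2 * (norm u)\<^sup>2 + 0) \<partial>D)"
        by (simp add: err_eq)
      also have "\<dots> = ennreal (((A u + P u * v1)\<^sup>2 + (- Q)\<^sup>2 * \<sigma>\<^sup>2) * (norm u)\<^sup>2 + 0)"
        by (rule D_int[OF D_prob D_sets supp mean var]) simp_all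
      finally show "(\<integral>\<^sup>+ v2. ?k (v1, v2) \<partial>D) = ennreal (((A u + P u * v1)\<^sup>2 + (- Q)\<^sup>2 * \<sigma>\<^sup>2) * (norm u)\<^sup>2 + 0)" .
    qed
    also have "\<dots> = (\<integral>\<^sup>+ v1. ennreal ((A u + P u * v1)\<^sup>2 * (norm u)\<^sup>2 + Q\<^sup>2 * \<sigma>\<^sup>2 * (norm u)\<^sup>2) \<partial>D)"
      by (rule nn_integral_cong) (simp add: algebra_simps)
    also have "\<dots> = ennreal (((A u)\<^sup>2 + (P u)\<^sup>2 * \<sigma>\<^sup>2) * (norm u)\<^sup>2 + Q\<^sup>2 * \<sigma>\<^sup>2 * (norm u)\<^sup>2)"
      by (rule D_int[OF D_prob D_sets supp mean var]) simp_all
    finally show ?thesis .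
  qed
  define c6 where "c6 = L1\<^sup>2 * \<mu>\<^sup>2 / 4"
  define c4 where "c4 = 3 * L0\<^sup>2 * \<sigma>\<^sup>2"
  define c2 where "c2 = 5/2 * \<sigma>\<^sup>2 * (f x)\<^sup>2 / \<mu>\<^sup>2"
  have pw: "((A u)\<^sup>2 + (P u)\<^sup>2 * \<sigma>\<^sup>2) * (norm u)\<^sup>2 + Q\<^sup>2 * \<sigma>\<^sup>2 * (norm u)\<^sup>2
      \<le> c6 * ((norm u)\<^sup>2)^3 + c4 * ((norm u)\<^sup>2)^2 + c2 * ((norm u)\<^sup>2)^1" for u
    unfolding c6_def c4_def c2_def
  proof (rule pointwise_bd[OF _ mu0])
    show "0 \<le> (norm u)\<^sup>2" by simp
    have "\<bar>f (x + \<mu> *\<^sub>R u) - f x - g x \<bullet> (\<mu> *\<^sub>R u)\<bar> \<le> L1 / 2 * (norm (\<mu> *\<^sub>R u))\<^sup>2"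
      by (rule taylor_bd[OF grad lip1])
    also have "\<dots> = \<mu> * (L1 * \<mu> * (norm u)\<^sup>2 / 2)" using mu0 by (simp add: power_mult_distrib power2_eq_square)
    finally have "\<bar>f (x + \<mu> *\<^sub>R u) - f x - g x \<bullet> (\<mu> *\<^sub>R u)\<bar> \<le> \<mu> * (L1 * \<mu> * (norm u)\<^sup>2 / 2)" .
    moreover have "f (x + \<mu> *\<^sub>R u) - f x - g x \<bullet> (\<mu> *\<^sub>R u) = \<mu> * A u"
      unfolding A_def using mu0 by (simp add: field_simps)
    ultimately have "\<mu> * \<bar>A u\<bar> \<le> \<mu> * (L1 * \<mu> * (norm u)\<^sup>2 / 2)" using mu0 by (simp add: abs_mult)
    then show "\<bar>A u\<bar> \<le> L1 * \<mu> * (norm u)\<^sup>2 / 2" using mu0 by simp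
    have d: "\<bar>f (x + \<mu> *\<^sub>R u) - f x\<bar> \<le> L0 * \<mu> * norm u"
      using lip0[of "x + \<mu> *\<^sub>R u" x] mu0 by simp
    have "(f (x + \<mu> *\<^sub>R u))\<^sup>2 \<le> 3/2 * (f x)\<^sup>2 + 3 * (L0 * \<mu> * norm u)\<^sup>2"
      using sq_bd[OF d, of "f x"] by simp
    then have "(f (x + \<mu> *\<^sub>R u))\<^sup>2 / \<mu>\<^sup>2 \<le> (3/2 * (f x)\<^sup>2 + 3 * (L0 * \<mu> * norm u)\<^sup>2) / \<mu>\<^sup>2"
      by (rule divide_right_mono) simp
    also have "\<dots> = 3/2 * (f x)\<^sup>2 / \<mu>\<^sup>2 + 3 * L0\<^sup>2 * (norm u)\<^sup>2"
      using mu0 by (simp add: field_simps power_mult_distrib)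
    finally show "(P u)\<^sup>2 + Q\<^sup>2 \<le> 5/2 * (f x)\<^sup>2 / \<mu>\<^sup>2 + 3 * L0\<^sup>2 * (norm u)\<^sup>2"
      unfolding P_def Q_def by (simp add: power_divide)
  qed
  have c0: "0 \<le> c6" "0 \<le> c4" "0 \<le> c2" unfolding c6_def c4_def c2_def by simp_all
  have "(\<integral>\<^sup>+ (u, v1, v2). ennreal (est_err f g x \<mu> u v1 v2) \<partial>(?G \<Otimes>\<^sub>M (D \<Otimes>\<^sub>M D)))
     = (\<integral>\<^sup>+ u. ennreal (((A u)\<^sup>2 + (P u)\<^sup>2 * \<sigma>\<^sup>2) * (norm u)\<^sup>2 + Q\<^sup>2 * \<sigma>\<^sup>2 * (norm u)\<^sup>2) \<partial>?G)"
    unfolding step1 step2 ..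
  also have "\<dots> \<le> (\<integral>\<^sup>+ u. ennreal (c6 * ((norm u)\<^sup>2)^3 + c4 * ((norm u)\<^sup>2)^2 + c2 * ((norm u)\<^sup>2)^1) \<partial>?G)"
    by (intro nn_integral_mono ennreal_leI pw)
  also have "\<dots> = ennreal (c6 * (n^3 + 6 * n^2 + 8 * n) + c4 * (n^2 + 2 * n) + c2 * n)"
    unfolding n_def by (rule gauss_lin[OF c0])
  also have "\<dots> \<le> ennreal (2 * L1 * \<sigma> * sqrt ((1 + 3 * \<sigma>\<^sup>2) * n * (n + 6) ^ 3) * \<bar>f x\<bar>
                    + 3 * L0\<^sup>2 * \<sigma>\<^sup>2 * (n + 4)\<^sup>2)"
  proof (rule ennreal_leI)
    have fx2: "(f x)\<^sup>2 = F\<^sup>2" unfolding F_def by simp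
    show "c6 * (n^3 + 6 * n^2 + 8 * n) + c4 * (n^2 + 2 * n) + c2 * n \<le> 2 * L1 * \<sigma> * sqrt ((1 + 3 * \<sigma>\<^sup>2) * n * (n + 6) ^ 3) * \<bar>f x\<bar>
                    + 3 * L0\<^sup>2 * \<sigma>\<^sup>2 * (n + 4)\<^sup>2"
      unfolding c6_def c4_def c2_def \<mu>_def fx2 F_def[symmetric]
      by (rule real_final[OF n1 L1_pos \<sigma>_pos F0 C4_def])
  qed
  finally show ?thesis unfolding Let_def n_def[symmetric] C4_def[symmetric] \<mu>_def[symmetric] .
qed


end
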